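(* Let $\tau$ be a continuous distributive triangle function on $\Delta^+$, $\Sigma$ a $\sigma$-ring of subsets of $\Omega\ne\emptyset$, $\gamma$ a $\tau$-decomposable measure on $\Sigma$ continuous from below, and $f:\Omega\to[0,+\infty]$ a measurable function that is $\gamma$-integrable on every $E\in\Sigma$. Then the set function $\nu^f:\Sigma\to\Delta^+$, $\nu^f_E:=\int_E f\,d\gamma$, is a $\tau$-decomposable measure.
   Context: $\Delta^+$: functions $F:[-\infty,+\infty]\to[0,1]$ non-decreasing, left-continuous on $\mathbb{R}$, $F(x)=0$ for $x\le0$, $F(+\infty)=1$, ordered pointwise; $\varepsilon_a(x)=1$ if $x>a$, else $0$. Triangle function: symmetric, associative $\tau:\Delta^+\times\Delta^+\to\Delta^+$, non-decreasing in each variable, identity $\varepsilon_0$; $G\oplus H=\tau(G,H)$, $\bigoplus_{k=1}^nG_k=\tau(G_1,\bigoplus_{k=2}^nG_k)$. $c\odot G=\varepsilon_0$ if $c=0$, $(c\odot G)(x)=G(x/c)$ if $c>0$; $\tau$ distributive if $c\odot(G\oplus H)=(c\odot G)\oplus(c\odot H)$ for all $c\ge0$. Convergence in $\Delta^+$ is weak convergence (at continuity points in $\mathbb{R}$ of the limit); $\tau$ continuous if continuous for it. $\tau$-decomposable measure on a ring $\Sigma$: $\gamma:\Sigma\to\Delta^+$, $\gamma_\emptyset=\varepsilon_0$, $\gamma_{E\cup F}=\tau(\gamma_E,\gamma_F)$ for disjoint $E,F$; continuous from below: $\gamma_{E_n}\to\gamma_E$ whenever $E_n\subseteq E_{n+1}$,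 $\bigcup E_n=E$ in $\Sigma$. Simple function $\sum_{i=1}^nx_i\chi_{E_i}$ ($x_i\in[0,\infty)$, $E_i\in\Sigma$ pairwise disjoint), $\int_Ef\,d\gamma=\bigoplus_{i}x_i\odot\gamma_{E\cap E_i}$. Measurable: pointwise limit of simple functions. $\mathcal S_{f,E}$: simple $\mathfrak f\le f$ on $E$. $f$ is $\gamma$-integrable on $E$ if some $H\in\Delta^+$ bounds $\int_E\mathfrak f\,d\gamma\ge H$ for all $\mathfrak f\in\mathcal S_{f,E}$; then $\int_Ef\,d\gamma=\inf\{\int_E\mathfrak f\,d\gamma:\mathfrak f\in\mathcal S_{f,E}\}$ in $(\Delta^+,\le)$. *)

theory Defs
  imports "HOL-Analysis.Analysis"
begin

type_synonym dist = "ereal \<Rightarrow> real"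

definition Delta_plus :: "dist set" where
  "Delta_plus = {F. (\<forall>x. 0 \<le> F x \<and> F x \<le> 1) \<and> mono F
     \<and> (\<forall>x::real. ((\<lambda>t::real. F (ereal t)) \<longlongrightarrow> F (ereal x)) (at_left x))
     \<and> (\<forall>x. x \<le> 0 \<longrightarrow> F x = 0) \<and> F PInfty = 1}"

definition eps :: "real \<Rightarrow> dist" where
  "eps a = (\<lambda>x. if x > ereal a then 1 else 0)"

definition triangle_function :: "(dist \<Rightarrow> dist \<Rightarrow> dist) \<Rightarrow> bool" where
  "triangle_function \<tau> \<longleftrightarrow>
     (\<forall>G\<in>Delta_plus. \<forall>H\<in>Delta_plus. \<tau> G H \<in> Delta_plus)
   \<and> (\<forall>G\<in>Delta_plus. \<forall>H\<in>Delta_plus. \<tau> G H = \<tau> H G)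
   \<and> (\<forall>G\<in>Delta_plus. \<forall>H\<in>Delta_plus. \<forall>K\<in>Delta_plus. \<tau> G (\<tau> H K) = \<tau> (\<tau> G H) K)
   \<and> (\<forall>G\<in>Delta_plus. \<forall>G'\<in>Delta_plus. \<forall>H\<in>Delta_plus. G \<le> G' \<longrightarrow> \<tau> G H \<le> \<tau> G' H)
   \<and> (\<forall>G\<in>Delta_plus. \<tau> G (eps 0) = G)"

definition smul :: "real \<Rightarrow> dist \<Rightarrow> dist" where
  "smul c G = (if c = 0 then eps 0 else (\<lambda>x. G (x / ereal c)))"

definition distributive_tf :: "(dist \<Rightarrow> dist \<Rightarrow> dist) \<Rightarrow> bool" where
  "distributive_tf \<tau> \<longleftrightarrow> (\<forall>c\<ge>0. \<forall>G\<in>Delta_plus. \<forall>H\<in>Delta_plus.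
      smul c (\<tau> G H) = \<tau> (smul c G) (smul c H))"

definition weak_conv :: "(nat \<Rightarrow> dist) \<Rightarrow> dist \<Rightarrow> bool" where
  "weak_conv Fs F \<longleftrightarrow> (\<forall>x::real. isCont (\<lambda>t::real. F (ereal t)) x \<longrightarrow>
      (\<lambda>n. Fs n (ereal x)) \<longlonglongrightarrow> F (ereal x))"

definition continuous_tf :: "(dist \<Rightarrow> dist \<Rightarrow> dist) \<Rightarrow> bool" where
  "continuous_tf \<tau> \<longleftrightarrow> (\<forall>Fs F Gs G. range Fs \<subseteq> Delta_plus \<and> F \<in> Delta_plus
      \<and> range Gs \<subseteq> Delta_plus \<and> G \<in> Delta_plus \<and> weak_conv Fs F \<and> weak_conv Gs G
      \<longrightarrow> weak_conv (\<lambda>n. \<tau> (Fs n) (Gs n)) (\<tau> F G))"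

definition sigma_ring :: "'a set \<Rightarrow> 'a set set \<Rightarrow> bool" where
  "sigma_ring \<Omega> \<Sigma> \<longleftrightarrow> ring_of_sets \<Omega> \<Sigma>
     \<and> (\<forall>A::nat \<Rightarrow> 'a set. range A \<subseteq> \<Sigma> \<longrightarrow> (\<Union>n. A n) \<in> \<Sigma>)"

definition decomposable_measure ::
  "(dist \<Rightarrow> dist \<Rightarrow> dist) \<Rightarrow> 'a set set \<Rightarrow> ('a set \<Rightarrow> dist) \<Rightarrow> bool" where
  "decomposable_measure \<tau> \<Sigma> \<gamma> \<longleftrightarrow> (\<forall>E\<in>\<Sigma>. \<gamma> E \<in> Delta_plus) \<and> \<gamma> {} = eps 0
     \<and> (\<forall>E\<in>\<Sigma>. \<forall>F\<in>\<Sigma>. E \<inter> F = {} \<longrightarrow> \<gamma> (E \<union> F) = \<tau> (\<gamma> E) (\<gamma> F))"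

definition cont_from_below :: "'a set set \<Rightarrow> ('a set \<Rightarrow> dist) \<Rightarrow> bool" where
  "cont_from_below \<Sigma> \<gamma> \<longleftrightarrow> (\<forall>En E. range En \<subseteq> \<Sigma> \<and> E \<in> \<Sigma> \<and> (\<forall>n. En n \<subseteq> En (Suc n))
      \<and> (\<Union>n. En n) = E \<longrightarrow> weak_conv (\<lambda>n. \<gamma> (En n)) (\<gamma> E))"

fun oplus_list :: "(dist \<Rightarrow> dist \<Rightarrow> dist) \<Rightarrow> dist list \<Rightarrow> dist" where
  "oplus_list \<tau> [] = eps 0"
| "oplus_list \<tau> [G] = G"
| "oplus_list \<tau> (G # Gs) = \<tau> G (oplus_list \<tau> Gs)"

text \<open>A simple function sum x_i chi_{E_i} is represented by the list of pairs (x_i, E_i).\<close>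
definition simple_rep :: "'a set set \<Rightarrow> (real \<times> 'a set) list \<Rightarrow> bool" where
  "simple_rep \<Sigma> xs \<longleftrightarrow> (\<forall>(x, A) \<in> set xs. 0 \<le> x \<and> A \<in> \<Sigma>)
     \<and> (\<forall>i<length xs. \<forall>j<length xs. i \<noteq> j \<longrightarrow> snd (xs ! i) \<inter> snd (xs ! j) = {})"

definition simple_val :: "(real \<times> 'a set) list \<Rightarrow> 'a \<Rightarrow> real" where
  "simple_val xs \<omega> = (\<Sum>i<length xs. fst (xs ! i) * indicator (snd (xs ! i)) \<omega>)"

definition simple_integral ::
  "(dist \<Rightarrow> dist \<Rightarrow> dist) \<Rightarrow> ('a set \<Rightarrow> dist) \<Rightarrow> (real \<times> 'a set) list \<Rightarrow> 'a set \<Rightarrow> dist" where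
  "simple_integral \<tau> \<gamma> xs E = oplus_list \<tau> (map (\<lambda>(x, A). smul x (\<gamma> (E \<inter> A))) xs)"

definition measurable_fn :: "'a set \<Rightarrow> 'a set set \<Rightarrow> ('a \<Rightarrow> ennreal) \<Rightarrow> bool" where
  "measurable_fn \<Omega> \<Sigma> f \<longleftrightarrow> (\<exists>s. (\<forall>n. simple_rep \<Sigma> (s n))
      \<and> (\<forall>\<omega>\<in>\<Omega>. (\<lambda>n. ennreal (simple_val (s n) \<omega>)) \<longlonglongrightarrow> f \<omega>))"

definition simple_integrals ::
  "(dist \<Rightarrow> dist \<Rightarrow> dist) \<Rightarrow> 'a set set \<Rightarrow> ('a set \<Rightarrow> dist) \<Rightarrow> ('a \<Rightarrow> ennreal) \<Rightarrow> 'a set \<Rightarrow> dist set" where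
  "simple_integrals \<tau> \<Sigma> \<gamma> f E = {simple_integral \<tau> \<gamma> xs E | xs. simple_rep \<Sigma> xs
      \<and> (\<forall>\<omega>\<in>E. ennreal (simple_val xs \<omega>) \<le> f \<omega>)}"

definition gamma_integrable ::
  "(dist \<Rightarrow> dist \<Rightarrow> dist) \<Rightarrow> 'a set set \<Rightarrow> ('a set \<Rightarrow> dist) \<Rightarrow> ('a \<Rightarrow> ennreal) \<Rightarrow> 'a set \<Rightarrow> bool" where
  "gamma_integrable \<tau> \<Sigma> \<gamma> f E \<longleftrightarrow> (\<exists>H\<in>Delta_plus. \<forall>G\<in>simple_integrals \<tau> \<Sigma> \<gamma> f E. H \<le> G)"

definition Delta_Inf :: "dist set \<Rightarrow> dist" where
  "Delta_Inf S = (THE H. H \<in> Delta_plus \<and> (\<forall>G\<in>S. H \<le> G)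
      \<and> (\<forall>K\<in>Delta_plus. (\<forall>G\<in>S. K \<le> G) \<longrightarrow> K \<le> H))"

definition gamma_integral ::
  "(dist \<Rightarrow> dist \<Rightarrow> dist) \<Rightarrow> 'a set set \<Rightarrow> ('a set \<Rightarrow> dist) \<Rightarrow> ('a \<Rightarrow> ennreal) \<Rightarrow> 'a set \<Rightarrow> dist" where
  "gamma_integral \<tau> \<Sigma> \<gamma> f E = Delta_Inf (simple_integrals \<tau> \<Sigma> \<gamma> f E)"

end

theory Submission imports Defs begin

lemma DP_D:
  assumes "F \<in> Delta_plus"
  shows "0 \<le> F x" "F x \<le> 1" "mono F" "F PInfty = 1" "x \<le> 0 \<Longrightarrow> F x = 0"
    "((\<lambda>t::real. F (ereal t)) \<longlongrightarrow> F (ereal r)) (at_left r)"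
  using assms unfolding Delta_plus_def by auto

lemma DP_mono: "F \<in> Delta_plus \<Longrightarrow> x \<le> y \<Longrightarrow> F x \<le> F y"
  using DP_D(3) monoD by blast

lemma DP_I:
  assumes "\<And>x. 0 \<le> F x" "\<And>x. F x \<le> 1" "\<And>x y. x \<le> y \<Longrightarrow> F x \<le> F y" "F PInfty = 1"
    "\<And>x. x \<le> 0 \<Longrightarrow> F x = 0"
    "\<And>r. ((\<lambda>t::real. F (ereal t)) \<longlongrightarrow> F (ereal r)) (at_left r)"
  shows "F \<in> Delta_plus"
  using assms unfolding Delta_plus_def by (auto intro: monoI)

lemma ev_left: "eventually (\<lambda>t::real. t < r) (at_left r)"
proof -
  have "eventually (\<lambda>t. t \<in> {r - 1<..<r}) (at_left r)" by (rule eventually_at_left_real) simp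
  then show ?thesis by (rule eventually_mono) simp
qed

lemma eps0_DP: "eps 0 \<in> Delta_plus"
proof (rule DP_I)
  fix r :: real
  show "((\<lambda>t::real. eps 0 (ereal t)) \<longlongrightarrow> eps 0 (ereal r)) (at_left r)"
  proof (cases "r \<le> 0")
    case True
    have "eventually (\<lambda>t. eps 0 (ereal t) = eps 0 (ereal r)) (at_left r)"
      using ev_left[of r] True
      by (auto elim!: eventually_mono simp: eps_def)
    then show ?thesis by (rule tendsto_eventually)
  next
    case False
    have "eventually (\<lambda>t. eps 0 (ereal t) = eps 0 (ereal r)) (at_left r)"
      using eventually_at_left_real[of 0 r] False
      by (auto elim!: eventually_mono simp: eps_def)
    then show ?thesis by (rule tendsto_eventually)
  qed
qed (auto simp: eps_def zero_ereal_def)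

lemma DP_le_eps0: "F \<in> Delta_plus \<Longrightarrow> F \<le> eps 0"
  unfolding le_fun_def eps_def using DP_D[of F] by (auto simp: not_less zero_ereal_def)

lemma smul_pos: "c > 0 \<Longrightarrow> smul c G (ereal r) = G (ereal (r / c))"
  by (simp add: smul_def)

lemma smul_PInf: "c > 0 \<Longrightarrow> smul c G PInfty = G PInfty"
  by (simp add: smul_def)

lemma smul_MInf: "c > 0 \<Longrightarrow> smul c G MInfty = G MInfty"
  by (simp add: smul_def)

lemma smul_DP:
  assumes "c \<ge> 0" "G \<in> Delta_plus"
  shows "smul c G \<in> Delta_plus"
proof (cases "c = 0")
  case True then show ?thesis by (simp add: smul_def eps0_DP)
next
  case False
  then have c: "c > 0" using assms by auto
  show ?thesis
  proof (rule DP_I)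
    fix x show "0 \<le> smul c G x" "smul c G x \<le> 1" using DP_D[OF assms(2)] c by (auto simp: smul_def)
  next
    fix x y :: ereal assume "x \<le> y"
    then show "smul c G x \<le> smul c G y" using c
      by (cases x; cases y) (auto simp: smul_def intro!: DP_mono[OF assms(2)] divide_right_mono)
  next
    show "smul c G PInfty = 1" using c DP_D[OF assms(2)] by (simp add: smul_def)
  next
    fix x :: ereal assume "x \<le> 0"
    then show "smul c G x = 0" using c DP_D(5)[OF assms(2)]
      by (cases x) (auto simp: smul_def divide_nonpos_pos)
  next
    fix r :: real
    have "((\<lambda>t. t / c) \<longlongrightarrow> r / c) (at_left r)"
      using c by (intro tendsto_intros) auto
    moreover have "eventually (\<lambda>t. t / c \<in> {..<r / c} \<and> t / c \<noteq> r / c) (at_left r)"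
      using ev_left[of r] c by (auto elim!: eventually_mono simp: divide_strict_right_mono)
    ultimately have "filterlim (\<lambda>t. t / c) (at_left (r / c)) (at_left r)"
      by (simp add: filterlim_at)
    from filterlim_compose[OF DP_D(6)[OF assms(2), of "r / c"] this]
    show "((\<lambda>t. smul c G (ereal t)) \<longlongrightarrow> smul c G (ereal r)) (at_left r)"
      using c by (simp add: smul_def)
  qed
qed

lemma smul_eps0: "c \<ge> 0 \<Longrightarrow> smul c (eps 0) = eps 0"
proof (cases "c = 0")
  case False
  assume "c \<ge> 0"
  then have c: "c > 0" using False by auto
  show ?thesis
  proof
    fix x show "smul c (eps 0) x = eps 0 x"
      using c by (cases x) (auto simp: smul_def eps_def zero_ereal_def zero_less_divide_iff)
  qed
qed (simp add: smul_def)

lemma smul_mono: "G \<le> G' \<Longrightarrow> smul c G \<le> smul c G'"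
  by (auto simp: smul_def le_fun_def)

lemma smul_anti:
  assumes "0 \<le> c" "c \<le> c'" "G \<in> Delta_plus"
  shows "smul c' G \<le> smul c G"
proof (cases "c = 0")
  case True
  then show ?thesis using DP_le_eps0[OF smul_DP[OF _ assms(3)], of c'] assms by (simp add: smul_def)
next
  case False
  then have c: "c > 0" "c' > 0" using assms by auto
  show ?thesis unfolding le_fun_def
  proof
    fix x :: ereal
    show "smul c' G x \<le> smul c G x"
    proof (cases x)
      case (real r)
      show ?thesis
      proof (cases "r \<ge> 0")
        case True
        then have "r / c' \<le> r / c" using c assms by (simp add: divide_left_mono)
        then show ?thesis using real c by (simp add: smul_def DP_mono[OF assms(3)])
      next
        case False
        then have "r / c' < 0" "r / c < 0" using c by (auto simp: divide_neg_pos)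
        then have "G (ereal (r / c')) = 0" "G (ereal (r/c)) = 0" using DP_D(5)[OF assms(3)]
          by (auto simp: zero_ereal_def)
        then show ?thesis using real c by (simp add: smul_def)
      qed
    qed (use c in \<open>auto simp: smul_def\<close>)
  qed
qed

section \<open>Infimum\<close>

definition gI :: "dist set \<Rightarrow> ereal \<Rightarrow> real" where
  "gI S x = Inf ((\<lambda>G. G x) ` S)"

definition LI :: "dist set \<Rightarrow> dist" where
  "LI S x = (case x of ereal r \<Rightarrow> (SUP t\<in>{..<r}. gI S (ereal t)) | PInfty \<Rightarrow> 1 | MInfty \<Rightarrow> 0)"

context
  fixes S assumes S: "S \<subseteq> Delta_plus" "S \<noteq> {}"
begin

lemma bddb: "bdd_below ((\<lambda>G. G x) ` S)"
  using S DP_D(1) by (auto intro!: bdd_belowI[of _ 0])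

lemma gI_le: "G \<in> S \<Longrightarrow> gI S x \<le> G x"
  unfolding gI_def by (rule cInf_lower) (use bddb in auto)

lemma gI_ge: "(\<And>G. G \<in> S \<Longrightarrow> a \<le> G x) \<Longrightarrow> a \<le> gI S x"
  unfolding gI_def by (rule cInf_greatest) (use S in auto)

lemma gI_nonneg: "0 \<le> gI S x"
  using S DP_D(1) by (auto intro!: gI_ge)

lemma gI_le1: "gI S x \<le> 1"
proof -
  obtain G where "G \<in> S" using S by auto
  then show ?thesis using gI_le[of G x] DP_D(2)[of G x] S by auto
qed

lemma gI_mono: "x \<le> y \<Longrightarrow> gI S x \<le> gI S y"
  by (rule gI_ge) (meson DP_mono S(1) gI_le order_trans subsetD)

lemma gI_zero: "x \<le> 0 \<Longrightarrow> gI S x = 0"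
proof -
  assume x: "x \<le> 0"
  obtain G where "G \<in> S" using S by auto
  then show ?thesis using gI_le[of G x] DP_D(5)[of G x] S x gI_nonneg[of x] by auto
qed

lemma bdda: "bdd_above ((\<lambda>t. gI S (ereal t)) ` A)"
  using gI_le1 by (auto intro!: bdd_aboveI[of _ 1])

lemma LI_real: "LI S (ereal r) = (SUP t\<in>{..<r}. gI S (ereal t))"
  by (simp add: LI_def)

lemma LI_ge_gI: "t < r \<Longrightarrow> gI S (ereal t) \<le> LI S (ereal r)"
  unfolding LI_real by (rule cSUP_upper) (use bdda in auto)

lemma LI_le_gI: "LI S (ereal r) \<le> gI S (ereal r)"
  unfolding LI_real by (rule cSUP_least) (auto intro: gI_mono)

lemma LI_PInf[simp]: "LI S \<infinity> = 1" and LI_MInf[simp]: "LI S (-\<infinity>) = 0"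
  by (auto simp: LI_def)

lemma LI_nonneg: "0 \<le> LI S (ereal r)"
  using LI_ge_gI[of "r - 1" r] gI_nonneg[of "ereal (r - 1)"] by auto

lemma LI_le1: "LI S x \<le> 1"
  by (cases x) (auto simp: LI_def intro!: cSUP_least gI_le1)

lemma LI_zero: "x \<le> 0 \<Longrightarrow> LI S x = 0"
proof (cases x)
  case (real r)
  assume "x \<le> 0"
  then show ?thesis using real LI_le_gI[of r] gI_zero[of x] LI_nonneg[of r] by auto
qed (auto simp: LI_def)

lemma LI_mono_real: "r \<le> r' \<Longrightarrow> LI S (ereal r) \<le> LI S (ereal r')"
  unfolding LI_real[of r] by (rule cSUP_least) (auto intro: LI_ge_gI)

lemma LI_mono: "x \<le> y \<Longrightarrow> LI S x \<le> LI S y"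
  apply (cases x; cases y)
  using LI_mono_real LI_le1 LI_nonneg by (auto simp del: LI_real)

lemma LI_leftcont: "((\<lambda>t. LI S (ereal t)) \<longlongrightarrow> LI S (ereal r)) (at_left r)"
proof (rule tendstoI)
  fix e :: real assume e: "e > 0"
  have "LI S (ereal r) - e < (SUP t\<in>{..<r}. gI S (ereal t))" using e LI_real by simp
  then obtain t0 where t0: "t0 < r" "LI S (ereal r) - e < gI S (ereal t0)"
    by (subst (asm) less_cSUP_iff) (use bdda in auto)
  have "eventually (\<lambda>t. t \<in> {t0<..<r}) (at_left r)" by (rule eventually_at_left_real) fact
  then show "eventually (\<lambda>t. dist (LI S (ereal t)) (LI S (ereal r)) < e) (at_left r)"
  proof (rule eventually_mono)
    fix t assume "t \<in> {t0<..<r}"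
    then have "gI S (ereal t0) \<le> LI S (ereal t)" "LI S (ereal t) \<le> LI S (ereal r)"
      by (auto intro: LI_ge_gI LI_mono_real)
    then show "dist (LI S (ereal t)) (LI S (ereal r)) < e" using t0 by (simp add: dist_real_def)
  qed
qed

lemma LI_DP: "LI S \<in> Delta_plus"
proof (rule DP_I)
  fix x show "0 \<le> LI S x" by (cases x) (auto simp del: LI_real intro: LI_nonneg)
qed (auto intro: LI_mono LI_le1 LI_zero LI_leftcont simp del: LI_real)

lemma LI_lower: "G \<in> S \<Longrightarrow> LI S \<le> G"
  unfolding le_fun_def
proof
  fix x assume G: "G \<in> S"
  show "LI S x \<le> G x"
  proof (cases x)
    case (real r)
    then show ?thesis using LI_le_gI[of r] gI_le[OF G, of x] by auto
  qed (use G S DP_D[of G] in \<open>auto simp: LI_def\<close>)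
qed

lemma LI_greatest:
  assumes K: "K \<in> Delta_plus" and lb: "\<And>G. G \<in> S \<Longrightarrow> K \<le> G"
  shows "K \<le> LI S"
  unfolding le_fun_def
proof
  fix x show "K x \<le> LI S x"
  proof (cases x)
    case (real r)
    have "eventually (\<lambda>t. K (ereal t) \<le> LI S (ereal r)) (at_left r)"
      using ev_left[of r]
    proof (rule eventually_mono)
      fix t assume "t < r"
      have "K (ereal t) \<le> gI S (ereal t)" using lb by (auto intro!: gI_ge simp: le_fun_def)
      also have "\<dots> \<le> LI S (ereal r)" using \<open>t < r\<close> by (rule LI_ge_gI)
      finally show "K (ereal t) \<le> LI S (ereal r)" .
    qed
    then have "K (ereal r) \<le> LI S (ereal r)"
      using tendsto_le[OF trivial_limit_at_left_real tendsto_const DP_D(6)[OF K, of r]] by blast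
    then show ?thesis using real by simp
  qed (use K DP_D[of K] in \<open>auto simp: LI_def\<close>)
qed

lemma Delta_Inf_eq: "Delta_Inf S = LI S"
  unfolding Delta_Inf_def
proof (rule the_equality)
  show "LI S \<in> Delta_plus \<and> (\<forall>G\<in>S. LI S \<le> G) \<and> (\<forall>K\<in>Delta_plus. (\<forall>G\<in>S. K \<le> G) \<longrightarrow> K \<le> LI S)"
    using LI_DP LI_lower LI_greatest by auto
next
  fix H assume "H \<in> Delta_plus \<and> (\<forall>G\<in>S. H \<le> G) \<and> (\<forall>K\<in>Delta_plus. (\<forall>G\<in>S. K \<le> G) \<longrightarrow> K \<le> H)"
  then show "H = LI S" using LI_DP LI_lower LI_greatest by (meson antisym)
qed

end

lemma fin_approx:
  assumes S: "S \<subseteq> Delta_plus" "S \<noteq> {}" and dir: "\<forall>a\<in>S. \<forall>b\<in>S. \<exists>c\<in>S. c \<le> a \<and> c \<le> b"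
    and P: "finite P" and e: "e > 0"
  shows "\<exists>c\<in>S. \<forall>p\<in>P. c p \<le> gI S p + e"
  using P
proof (induction P rule: finite_induct)
  case empty then show ?case using S by auto
next
  case (insert p P)
  then obtain c where c: "c \<in> S" "\<forall>q\<in>P. c q \<le> gI S q + e" by auto
  have "gI S p < gI S p + e" using e by simp
  then obtain a where a: "a \<in> S" "a p < gI S p + e"
    unfolding gI_def by (subst (asm) cInf_less_iff) (use S bddb[OF S] in auto)
  obtain d where d: "d \<in> S" "d \<le> c" "d \<le> a" using dir a c by blast
  show ?case
  proof (intro bexI[of _ d] ballI)
    fix q assume "q \<in> insert p P"
    then show "d q \<le> gI S q + e"
    proof
      assume "q = p" then show ?thesis using d(3) a(2) by (auto simp: le_fun_def intro: order_trans[of _ "a p"])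
    next
      assume "q \<in> P" then show ?thesis using d(2) c(2) by (auto simp: le_fun_def intro: order_trans[of _ "c q"])
    qed
  qed (fact d)
qed

lemma W:
  assumes S: "S \<subseteq> Delta_plus" "S \<noteq> {}" and dir: "\<forall>a\<in>S. \<forall>b\<in>S. \<exists>c\<in>S. c \<le> a \<and> c \<le> b"
  shows "\<exists>s. range s \<subseteq> S \<and> weak_conv s (LI S)"
proof -
  define P where "P n = (\<lambda>k. ereal (real k / real (Suc n))) ` {..(Suc n)^2}" for n
  have "\<forall>n. \<exists>c\<in>S. \<forall>p\<in>P n. c p \<le> gI S p + 1/real (Suc n)"
  proof
    fix n
    have "finite (P n)" by (simp add: P_def)
    from fin_approx[OF S dir this, of "1/real (Suc n)"]
    show "\<exists>c\<in>S. \<forall>p\<in>P n. c p \<le> gI S p + 1/real (Suc n)" by simp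
  qed
  then obtain s where s: "\<And>n. s n \<in> S" "\<And>n p. p \<in> P n \<Longrightarrow> s n p \<le> gI S p + 1/real (Suc n)"
    by metis
  have sD: "s n \<in> Delta_plus" for n using s S by auto
  have "weak_conv s (LI S)"
    unfolding weak_conv_def
  proof (intro allI impI)
    fix x :: real assume cont: "isCont (\<lambda>t. LI S (ereal t)) x"
    show "(\<lambda>n. s n (ereal x)) \<longlonglongrightarrow> LI S (ereal x)"
    proof (cases "x \<le> 0")
      case True
      then have "s n (ereal x) = 0" "LI S (ereal x) = 0" for n
        using DP_D(5)[OF sD] LI_zero[OF S] by (auto simp: zero_ereal_def)
      then show ?thesis by simp
    next
      case False
      then have x: "x > 0" by simp
      show ?thesis
      proof (rule LIMSEQ_I)
        fix e :: real assume e: "e > 0"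
        from cont have "(\<lambda>t. LI S (ereal t)) \<midarrow>x\<rightarrow> LI S (ereal x)" by (simp add: isCont_def)
        from LIM_D[OF this, of "e/2"] e obtain d where d: "d > 0"
          "\<And>t. t \<noteq> x \<and> norm (t - x) < d \<Longrightarrow> norm (LI S (ereal t) - LI S (ereal x)) < e/2" by auto
        obtain N1 :: nat where N1: "x < real N1" using reals_Archimedean2 by blast
        obtain N2 :: nat where N2: "inverse (real (Suc N2)) < min (d/2) (e/2)"
          using reals_Archimedean[of "min (d/2) (e/2)"] d e by auto
        show "\<exists>N. \<forall>n\<ge>N. norm (s n (ereal x) - LI S (ereal x)) < e"
        proof (intro exI allI impI)
          fix n assume n: "n \<ge> max N1 N2"
          define m where "m = real (Suc n)"
          have m: "m > 0" "m \<ge> 1" by (auto simp: m_def)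
          have im: "1/m < min (d/2) (e/2)"
          proof -
            have "1/m \<le> inverse (real (Suc N2))" using n by (auto simp: m_def field_simps)
            then show ?thesis using N2 by linarith
          qed
          define k where "k = nat \<lfloor>x * m\<rfloor> + 1"
          have fl: "real_of_int \<lfloor>x * m\<rfloor> \<ge> 0" using x m by simp
          have rk: "real k = real_of_int \<lfloor>x * m\<rfloor> + 1" using fl by (simp add: k_def)
          define q where "q = real k / m"
          have fc: "real_of_int \<lfloor>x*m\<rfloor> \<le> x*m" "x*m < real_of_int \<lfloor>x*m\<rfloor> + 1"
            using floor_correct[of "x*m"] by auto
          have k1: "x * m < real k" "real k \<le> x * m + 1" using fc rk by linarith+
          have q1: "x < q" unfolding q_def using k1 m by (simp add: pos_less_divide_eq)
          have q2: "q \<le> x + 1/m" unfolding q_def using k1 m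
            by (simp add: pos_divide_le_eq distrib_right)
          have "real k \<le> x * m + 1" using k1 by simp
          also have "\<dots> \<le> real n * m + 1" using N1 n m by (intro add_right_mono mult_right_mono) auto
          also have "\<dots> \<le> m * m" by (simp add: m_def field_simps)
          also have "\<dots> = real ((Suc n)^2)" by (simp add: m_def power2_eq_square algebra_simps)
          finally have "k \<le> (Suc n)^2" by (simp only: of_nat_le_iff)
          then have qP: "ereal q \<in> P n" unfolding P_def q_def m_def by auto
          define r where "r = x + 3 * d / 4"
          have "q < r" using q2 im d by (simp add: r_def)
          have "s n (ereal x) \<le> s n (ereal q)" using q1 by (intro DP_mono[OF sD]) auto
          also have "\<dots> \<le> gI S (ereal q) + 1/m" using s(2)[OF qP] by (simp add: m_def)
          also have "\<dots> \<le> LI S (ereal r) + 1/m" using LI_ge_gI[OF S \<open>q < r\<close>] by simp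
          also have "\<dots> < LI S (ereal x) + e/2 + 1/m"
          proof -
            have "r \<noteq> x \<and> norm (r - x) < d" using d by (simp add: r_def)
            from d(2)[OF this] have "\<bar>LI S (ereal r) - LI S (ereal x)\<bar> < e/2" by (simp only: real_norm_def)
            then show ?thesis by arith
          qed
          finally have up: "s n (ereal x) < LI S (ereal x) + e" using im by linarith
          have "LI S (ereal x) \<le> s n (ereal x)" using LI_lower[OF S s(1)] by (simp add: le_fun_def)
          then show "norm (s n (ereal x) - LI S (ereal x)) < e" using up by simp
        qed
      qed
    qed
  qed
  then show ?thesis using s by auto
qed

lemma cont_point:
  fixes T :: "real \<Rightarrow> real"
  assumes "mono T" "a < b"
  shows "\<exists>t. a < t \<and> t < b \<and> isCont T t"
proof (rule ccontr)
  assume "\<not> ?thesis"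
  then have "{a<..<b} \<subseteq> {t. \<not> isCont T t}" by auto
  from countable_subset[OF this mono_ctble_discont[OF assms(1)]] have "countable {a<..<b}" .
  then show False using uncountable_open_interval[of a b] assms by auto
qed

lemma tf_D:
  assumes "triangle_function \<tau>"
  shows "G \<in> Delta_plus \<Longrightarrow> H \<in> Delta_plus \<Longrightarrow> \<tau> G H \<in> Delta_plus"
    "G \<in> Delta_plus \<Longrightarrow> H \<in> Delta_plus \<Longrightarrow> \<tau> G H = \<tau> H G"
    "G \<in> Delta_plus \<Longrightarrow> H \<in> Delta_plus \<Longrightarrow> K \<in> Delta_plus \<Longrightarrow> \<tau> G (\<tau> H K) = \<tau> (\<tau> G H) K"
    "G \<in> Delta_plus \<Longrightarrow> G' \<in> Delta_plus \<Longrightarrow> H \<in> Delta_plus \<Longrightarrow> G \<le> G' \<Longrightarrow> \<tau> G H \<le> \<tau> G' H"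
    "G \<in> Delta_plus \<Longrightarrow> \<tau> G (eps 0) = G"
  using assms unfolding triangle_function_def by (blast+)

lemma tf_mono:
  assumes "triangle_function \<tau>" "G \<in> Delta_plus" "G' \<in> Delta_plus" "H \<in> Delta_plus" "H' \<in> Delta_plus"
    "G \<le> G'" "H \<le> H'"
  shows "\<tau> G H \<le> \<tau> G' H'"
proof -
  have "\<tau> G H \<le> \<tau> G' H" using assms tf_D(4) by blast
  also have "\<dots> = \<tau> H G'" using assms tf_D(2) by blast
  also have "\<dots> \<le> \<tau> H' G'" using assms tf_D(4) by blast
  also have "\<dots> = \<tau> G' H'" using assms tf_D(2) by blast
  finally show ?thesis .
qed

lemma key:
  assumes tf: "triangle_function \<tau>" and ct: "continuous_tf \<tau>"
    and A: "A \<subseteq> Delta_plus" "A \<noteq> {}" "\<forall>a\<in>A. \<forall>b\<in>A. \<exists>c\<in>A. c \<le> a \<and> c \<le> b"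
    and B: "B \<subseteq> Delta_plus" "B \<noteq> {}" "\<forall>a\<in>B. \<forall>b\<in>B. \<exists>c\<in>B. c \<le> a \<and> c \<le> b"
    and K: "K \<in> Delta_plus" and lb: "\<And>a b. a \<in> A \<Longrightarrow> b \<in> B \<Longrightarrow> K \<le> \<tau> a b"
  shows "K \<le> \<tau> (LI A) (LI B)"
proof -
  obtain sa where sa: "range sa \<subseteq> A" "weak_conv sa (LI A)" using W[OF A] by blast
  obtain sb where sb: "range sb \<subseteq> B" "weak_conv sb (LI B)" using W[OF B] by blast
  define T where "T = \<tau> (LI A) (LI B)"
  have TD: "T \<in> Delta_plus" unfolding T_def by (intro tf_D(1)[OF tf] LI_DP A(1,2) B(1,2))
  have wc: "weak_conv (\<lambda>n. \<tau> (sa n) (sb n)) T"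
  proof -
    have ct': "\<And>Fs F Gs G. range Fs \<subseteq> Delta_plus \<Longrightarrow> F \<in> Delta_plus \<Longrightarrow> range Gs \<subseteq> Delta_plus
      \<Longrightarrow> G \<in> Delta_plus \<Longrightarrow> weak_conv Fs F \<Longrightarrow> weak_conv Gs G \<Longrightarrow> weak_conv (\<lambda>n. \<tau> (Fs n) (Gs n)) (\<tau> F G)"
      using ct unfolding continuous_tf_def by blast
    have "range sa \<subseteq> Delta_plus" "range sb \<subseteq> Delta_plus" using sa(1) sb(1) A(1) B(1) by auto
    from ct'[OF this(1) LI_DP[OF A(1,2)] this(2) LI_DP[OF B(1,2)] sa(2) sb(2)]
    show ?thesis unfolding T_def .
  qed
  have monoT: "mono (\<lambda>t. T (ereal t))" using DP_mono[OF TD] by (auto intro!: monoI)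
  have "K x \<le> T x" for x
  proof (cases x)
    case (real r)
    have "K (ereal r) \<le> T (ereal r)"
    proof (rule field_le_epsilon)
      fix e :: real assume e: "e > 0"
      have "eventually (\<lambda>t. K (ereal r) - e < K (ereal t)) (at_left r)"
        using order_tendstoD(1)[OF DP_D(6)[OF K, of r], of "K (ereal r) - e"] e by simp
      then obtain b where b: "b < r" "\<And>y. b < y \<Longrightarrow> y < r \<Longrightarrow> K (ereal r) - e < K (ereal y)"
        unfolding eventually_at_left_field by blast
      obtain t where t: "b < t" "t < r" "isCont (\<lambda>t. T (ereal t)) t" using cont_point[OF monoT b(1)] by blast
      have lim: "(\<lambda>n. \<tau> (sa n) (sb n) (ereal t)) \<longlonglongrightarrow> T (ereal t)" using wc t(3) unfolding weak_conv_def by blast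
      have "K (ereal t) \<le> T (ereal t)"
      proof (rule LIMSEQ_le_const[OF lim], intro exI allI impI)
        fix n
        have "sa n \<in> A" "sb n \<in> B" using sa(1) sb(1) by auto
        from lb[OF this] show "K (ereal t) \<le> \<tau> (sa n) (sb n) (ereal t)" by (simp add: le_fun_def)
      qed
      moreover have "T (ereal t) \<le> T (ereal r)" using t by (intro DP_mono[OF TD]) auto
      ultimately show "K (ereal r) \<le> T (ereal r) + e" using b(2)[OF t(1,2)] by linarith
    qed
    then show ?thesis using real by simp
  next
    case PInf then show ?thesis using DP_D[OF K] DP_D[OF TD] by simp
  next
    case MInf then show ?thesis using DP_D(5)[OF K, of x] DP_D(1)[OF TD, of x] by simp
  qed
  then show ?thesis unfolding T_def le_fun_def by blast
qed



lemma simple_rep_Nil[simp]: "simple_rep \<Sigma> []"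
  by (simp add: simple_rep_def)

lemma simple_rep_Cons:
  "simple_rep \<Sigma> ((x,A)#xs) \<longleftrightarrow> 0 \<le> x \<and> A \<in> \<Sigma> \<and> simple_rep \<Sigma> xs \<and> (\<forall>p\<in>set xs. A \<inter> snd p = {})"
proof
  assume H: "simple_rep \<Sigma> ((x,A)#xs)"
  have a: "0 \<le> x" "A \<in> \<Sigma>" "\<forall>(y,B)\<in>set xs. 0 \<le> y \<and> B \<in> \<Sigma>" using H by (auto simp: simple_rep_def)
  have b: "snd (xs!i) \<inter> snd (xs!j) = {}" if "i < length xs" "j < length xs" "i \<noteq> j" for i j
  proof -
    have "Suc i < length ((x,A)#xs)" "Suc j < length ((x,A)#xs)" "Suc i \<noteq> Suc j" using that by auto
    then have "snd (((x,A)#xs)!Suc i) \<inter> snd (((x,A)#xs)!Suc j) = {}" using H unfolding simple_rep_def by blast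
    then show ?thesis by simp
  qed
  have c: "A \<inter> snd p = {}" if "p \<in> set xs" for p
  proof -
    obtain k where k: "k < length xs" "p = xs ! k" using \<open>p \<in> set xs\<close> by (auto simp: in_set_conv_nth)
    have "0 < length ((x,A)#xs)" "Suc k < length ((x,A)#xs)" "0 \<noteq> Suc k" using k by auto
    then have "snd (((x,A)#xs) ! 0) \<inter> snd (((x,A)#xs) ! Suc k) = {}"
      using H unfolding simple_rep_def by blast
    then show ?thesis using k by simp
  qed
  show "0 \<le> x \<and> A \<in> \<Sigma> \<and> simple_rep \<Sigma> xs \<and> (\<forall>p\<in>set xs. A \<inter> snd p = {})"
    using a b c by (auto simp: simple_rep_def)
next
  assume R: "0 \<le> x \<and> A \<in> \<Sigma> \<and> simple_rep \<Sigma> xs \<and> (\<forall>p\<in>set xs. A \<inter> snd p = {})"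
  show "simple_rep \<Sigma> ((x,A)#xs)"
    unfolding simple_rep_def
  proof (intro conjI allI impI)
    show "\<forall>(x, A)\<in>set ((x, A) # xs). 0 \<le> x \<and> A \<in> \<Sigma>" using R by (auto simp: simple_rep_def)
  next
    fix i j assume ij: "i < length ((x, A) # xs)" "j < length ((x, A) # xs)" "i \<noteq> j"
    show "snd (((x, A) # xs) ! i) \<inter> snd (((x, A) # xs) ! j) = {}"
    proof (cases i)
      case 0
      then obtain k where "j = Suc k" "k < length xs" using ij by (cases j) auto
      then show ?thesis using R 0 nth_mem[of k xs] by auto
    next
      case (Suc i')
      show ?thesis
      proof (cases j)
        case 0
        then show ?thesis using R Suc ij nth_mem[of i' xs] by auto
      next
        case (Suc j')
        then show ?thesis using R \<open>i = Suc i'\<close> ij unfolding simple_rep_def by auto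
      qed
    qed
  qed
qed

lemma simple_val_Nil[simp]: "simple_val [] w = 0"
  by (simp add: simple_val_def)

lemma simple_val_Cons: "simple_val ((x,A)#xs) w = x * indicator A w + simple_val xs w"
  unfolding simple_val_def by (simp add: sum.lessThan_Suc_shift del: sum.lessThan_Suc)

lemma simple_val_zero: "w \<notin> \<Union>(snd ` set xs) \<Longrightarrow> simple_val xs w = 0"
  by (induction xs) (auto simp: simple_val_Cons)

lemma simple_val_look:
  "simple_rep \<Sigma> xs \<Longrightarrow> (x,A) \<in> set xs \<Longrightarrow> w \<in> A \<Longrightarrow> simple_val xs w = x"
proof (induction xs)
  case (Cons p xs)
  obtain y B where p: "p = (y,B)" by fastforce
  show ?case
  proof (cases "(x,A) = p")
    case True
    then have "w \<notin> \<Union>(snd ` set xs)" using Cons.prems p by (auto simp: simple_rep_Cons)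
    then show ?thesis using True p Cons.prems by (simp add: simple_val_Cons simple_val_zero)
  next
    case False
    then have "(x,A) \<in> set xs" using Cons.prems by auto
    then have "B \<inter> snd (x,A) = {}" using Cons.prems(1) unfolding p simple_rep_Cons by blast
    then have "w \<notin> B" using Cons.prems by auto
    then show ?thesis using Cons p \<open>(x,A) \<in> set xs\<close> by (simp add: simple_val_Cons simple_rep_Cons)
  qed
qed simp

lemma simple_val_nonneg: "simple_rep \<Sigma> xs \<Longrightarrow> 0 \<le> simple_val xs w"
  by (induction xs) (auto simp: simple_val_Cons simple_rep_Cons)

lemma simple_val_Cons_in: "simple_rep \<Sigma> ((x,A)#xs) \<Longrightarrow> w \<in> A \<Longrightarrow> simple_val ((x,A)#xs) w = x"
  by (rule simple_val_look) auto

lemma simple_val_Cons_out: "w \<notin> A \<Longrightarrow> simple_val ((x,A)#xs) w = simple_val xs w"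
  by (simp add: simple_val_Cons)

lemma simple_rep_append:
  "simple_rep \<Sigma> xs \<Longrightarrow> simple_rep \<Sigma> ys \<Longrightarrow> (\<forall>p\<in>set xs. \<forall>q\<in>set ys. snd p \<inter> snd q = {})
   \<Longrightarrow> simple_rep \<Sigma> (xs @ ys)"
proof (induction xs)
  case (Cons p xs)
  obtain y B where p: "p = (y,B)" by fastforce
  have h: "0 \<le> y" "B \<in> \<Sigma>" "simple_rep \<Sigma> xs" "\<forall>q\<in>set xs. B \<inter> snd q = {}"
    using Cons.prems(1) unfolding p simple_rep_Cons by blast+
  have "simple_rep \<Sigma> (xs @ ys)" using Cons.IH h(3) Cons.prems(2,3) by simp
  moreover have "\<forall>q\<in>set (xs @ ys). B \<inter> snd q = {}" using h(4) Cons.prems(3) p by auto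
  ultimately show ?case using h unfolding p by (simp add: simple_rep_Cons)
qed simp

lemma simple_rep_map:
  assumes "simple_rep \<Sigma> xs" "\<And>x A. (x,A) \<in> set xs \<Longrightarrow> 0 \<le> h x \<and> g A \<in> \<Sigma> \<and> g A \<subseteq> A"
  shows "simple_rep \<Sigma> (map (\<lambda>(x,A). (h x, g A)) xs)"
  using assms
proof (induction xs)
  case (Cons p xs)
  obtain y B where p: "p = (y,B)" by fastforce
  have h: "0 \<le> y" "B \<in> \<Sigma>" "simple_rep \<Sigma> xs" "\<forall>q\<in>set xs. B \<inter> snd q = {}"
    using Cons.prems(1) unfolding p simple_rep_Cons by blast+
  have "simple_rep \<Sigma> (map (\<lambda>(x,A). (h x, g A)) xs)" using h(3) Cons.prems(2) by (intro Cons.IH) auto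
  moreover have "\<forall>q\<in>set (map (\<lambda>(x,A). (h x, g A)) xs). g B \<inter> snd q = {}"
  proof
    fix q assume "q \<in> set (map (\<lambda>(x,A). (h x, g A)) xs)"
    then obtain z C where zC: "(z,C) \<in> set xs" "q = (h z, g C)" by auto
    have "g C \<subseteq> C" "g B \<subseteq> B" using Cons.prems(2) zC(1) p by auto
    then show "g B \<inter> snd q = {}" using h(4) zC by fastforce
  qed
  moreover have "0 \<le> h y" "g B \<in> \<Sigma>" using Cons.prems(2)[of y B] p by auto
  ultimately show ?case by (simp add: p simple_rep_Cons)
qed simp

lemma tf_swap:
  assumes tf: "triangle_function \<tau>" and D: "a \<in> Delta_plus" "b \<in> Delta_plus" "A \<in> Delta_plus" "B \<in> Delta_plus"
  shows "\<tau> (\<tau> a b) (\<tau> A B) = \<tau> (\<tau> a A) (\<tau> b B)"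
proof -
  note T = tf_D[OF tf]
  have "\<tau> (\<tau> a b) (\<tau> A B) = \<tau> a (\<tau> b (\<tau> A B))" by (rule sym, rule T(3)) (intro D T(1))+
  also have "\<tau> b (\<tau> A B) = \<tau> (\<tau> b A) B" by (rule T(3)) (intro D)+
  also have "\<tau> b A = \<tau> A b" by (rule T(2)) (intro D)+
  also have "\<tau> (\<tau> A b) B = \<tau> A (\<tau> b B)" by (rule sym, rule T(3)) (intro D)+
  also have "\<tau> a (\<tau> A (\<tau> b B)) = \<tau> (\<tau> a A) (\<tau> b B)" by (rule T(3)) (intro D T(1))+
  finally show ?thesis .
qed

definition addone :: "(real \<times> 'a set) list \<Rightarrow> real \<times> 'a set \<Rightarrow> (real \<times> 'a set) list" where
  "addone xs p = map (\<lambda>(x,A). (max x (fst p), A \<inter> snd p)) xs @ map (\<lambda>(x,A). (x, A - snd p)) xs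
     @ [(fst p, snd p - \<Union>(snd ` set xs))]"

fun maxrep :: "(real \<times> 'a set) list \<Rightarrow> (real \<times> 'a set) list \<Rightarrow> (real \<times> 'a set) list" where
  "maxrep xs [] = xs"
| "maxrep xs (p#ys) = maxrep (addone xs p) ys"

lemma simple_val_append: "simple_val (xs @ ys) w = simple_val xs w + simple_val ys w"
  by (induction xs) (auto simp: simple_val_Cons)

lemma simple_val_restrict:
  "simple_val (map (\<lambda>(x,A). (x, A \<inter> E)) xs) w = (if w \<in> E then simple_val xs w else 0)"
  by (induction xs) (auto simp: simple_val_Cons indicator_def)

locale ctx =
  fixes \<tau> :: "dist \<Rightarrow> dist \<Rightarrow> dist" and \<Omega> :: "'a set" and \<Sigma> :: "'a set set" and \<gamma> :: "'a set \<Rightarrow> dist"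
  assumes tf: "triangle_function \<tau>" and dis: "distributive_tf \<tau>"
    and ring: "ring_of_sets \<Omega> \<Sigma>" and dec: "decomposable_measure \<tau> \<Sigma> \<gamma>"
begin

lemma gD: "E \<in> \<Sigma> \<Longrightarrow> \<gamma> E \<in> Delta_plus" "\<gamma> {} = eps 0"
  "E \<in> \<Sigma> \<Longrightarrow> F \<in> \<Sigma> \<Longrightarrow> E \<inter> F = {} \<Longrightarrow> \<gamma> (E \<union> F) = \<tau> (\<gamma> E) (\<gamma> F)"
  using dec unfolding decomposable_measure_def by (blast+)

lemma SInt: "E \<in> \<Sigma> \<Longrightarrow> F \<in> \<Sigma> \<Longrightarrow> E \<inter> F \<in> \<Sigma>"
  and SDiff: "E \<in> \<Sigma> \<Longrightarrow> F \<in> \<Sigma> \<Longrightarrow> E - F \<in> \<Sigma>"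
  and SUn: "E \<in> \<Sigma> \<Longrightarrow> F \<in> \<Sigma> \<Longrightarrow> E \<union> F \<in> \<Sigma>"
  and Sempty: "{} \<in> \<Sigma>"
  using semiring_of_sets.Int[OF ring_of_sets.axioms(1)[OF ring]] ring_of_sets.Diff[OF ring]
    ring_of_sets.Un[OF ring] semiring_of_sets.empty_sets[OF ring_of_sets.axioms(1)[OF ring]] by blast+

lemma smul_tau: "0 \<le> c \<Longrightarrow> G \<in> Delta_plus \<Longrightarrow> H \<in> Delta_plus \<Longrightarrow> smul c (\<tau> G H) = \<tau> (smul c G) (smul c H)"
  using dis unfolding distributive_tf_def by blast

lemmas T = tf_D[OF tf]

lemma tau_eps_left: "G \<in> Delta_plus \<Longrightarrow> \<tau> (eps 0) G = G"
  using T(2)[OF eps0_DP] T(5) by metis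

lemma oplus_Cons: "G \<in> Delta_plus \<Longrightarrow> oplus_list \<tau> (G#Gs) = \<tau> G (oplus_list \<tau> Gs)"
  by (cases Gs) (auto simp: T(5))

abbreviation si where "si xs E \<equiv> simple_integral \<tau> \<gamma> xs E"

lemma si_Nil[simp]: "si [] E = eps 0"
  by (simp add: simple_integral_def)

lemma si_Cons: "E \<in> \<Sigma> \<Longrightarrow> A \<in> \<Sigma> \<Longrightarrow> 0 \<le> x \<Longrightarrow> si ((x,A)#xs) E = \<tau> (smul x (\<gamma> (E \<inter> A))) (si xs E)"
  unfolding simple_integral_def by (simp add: oplus_Cons smul_DP gD SInt)

lemma si_DP: "simple_rep \<Sigma> xs \<Longrightarrow> E \<in> \<Sigma> \<Longrightarrow> si xs E \<in> Delta_plus"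
proof (induction xs)
  case (Cons p xs)
  obtain y B where p: "p = (y,B)" by fastforce
  show ?case using Cons unfolding p simple_rep_Cons
    by (simp add: si_Cons T(1) smul_DP gD SInt)
qed (simp add: eps0_DP)

lemma si_split:
  assumes "simple_rep \<Sigma> xs" "E \<in> \<Sigma>" "C \<in> \<Sigma>"
  shows "si xs E = \<tau> (si xs (E \<inter> C)) (si xs (E - C))"
  using assms(1)
proof (induction xs)
  case Nil then show ?case by (simp add: T(5) eps0_DP)
next
  case (Cons p xs)
  obtain x A where p: "p = (x,A)" by fastforce
  have h: "0 \<le> x" "A \<in> \<Sigma>" "simple_rep \<Sigma> xs" using Cons.prems unfolding p simple_rep_Cons by blast+
  have S: "E \<inter> C \<in> \<Sigma>" "E - C \<in> \<Sigma>" "E \<inter> C \<inter> A \<in> \<Sigma>" "(E - C) \<inter> A \<in> \<Sigma>"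
    using assms h by (auto intro: SInt SDiff)
  have "E \<inter> A = (E \<inter> C \<inter> A) \<union> ((E - C) \<inter> A)" by auto
  then have g: "\<gamma> (E \<inter> A) = \<tau> (\<gamma> (E \<inter> C \<inter> A)) (\<gamma> ((E - C) \<inter> A))"
    using gD(3)[OF S(3,4)] by auto
  have "si (p#xs) E = \<tau> (smul x (\<gamma> (E \<inter> A))) (si xs E)" using si_Cons assms h p by simp
  also have "\<dots> = \<tau> (\<tau> (smul x (\<gamma> (E \<inter> C \<inter> A))) (smul x (\<gamma> ((E - C) \<inter> A))))
       (\<tau> (si xs (E \<inter> C)) (si xs (E - C)))"
    using g smul_tau h gD S Cons.IH h(3) by simp
  also have "\<dots> = \<tau> (\<tau> (smul x (\<gamma> (E \<inter> C \<inter> A))) (si xs (E \<inter> C)))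
       (\<tau> (smul x (\<gamma> ((E - C) \<inter> A))) (si xs (E - C)))"
    by (rule tf_swap[OF tf]) (use S h in \<open>auto intro: smul_DP gD si_DP\<close>)
  also have "\<dots> = \<tau> (si (p#xs) (E \<inter> C)) (si (p#xs) (E - C))"
    using si_Cons S h p by simp
  finally show ?case .
qed

lemma si_disj: "simple_rep \<Sigma> xs \<Longrightarrow> D \<in> \<Sigma> \<Longrightarrow> (\<forall>p\<in>set xs. D \<inter> snd p = {}) \<Longrightarrow> si xs D = eps 0"
proof (induction xs)
  case (Cons p xs)
  obtain y B where p: "p = (y,B)" by fastforce
  have h: "0 \<le> y" "B \<in> \<Sigma>" "simple_rep \<Sigma> xs" "D \<inter> B = {}" using Cons.prems unfolding p simple_rep_Cons by auto
  then show ?case using Cons p by (simp add: si_Cons gD smul_eps0 T(5) eps0_DP)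
qed simp

lemma si_single:
  assumes "simple_rep \<Sigma> ((x,A)#xs)" "D \<in> \<Sigma>" "D \<subseteq> A"
  shows "si ((x,A)#xs) D = smul x (\<gamma> D)"
proof -
  have h: "0 \<le> x" "A \<in> \<Sigma>" "simple_rep \<Sigma> xs" "\<forall>p\<in>set xs. A \<inter> snd p = {}"
    using assms(1) unfolding simple_rep_Cons by blast+
  have "si xs D = eps 0" using h assms by (intro si_disj) auto
  moreover have "D \<inter> A = D" using assms by auto
  ultimately show ?thesis using h assms by (simp add: si_Cons T(5) smul_DP gD)
qed

lemma si_miss:
  assumes "simple_rep \<Sigma> ((x,A)#xs)" "D \<in> \<Sigma>" "D \<inter> A = {}"
  shows "si ((x,A)#xs) D = si xs D"
proof -
  have h: "0 \<le> x" "A \<in> \<Sigma>" "simple_rep \<Sigma> xs"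
    using assms(1) unfolding simple_rep_Cons by blast+
  then show ?thesis using assms by (simp add: si_Cons gD smul_eps0 tau_eps_left si_DP)
qed

lemma lemC:
  assumes "simple_rep \<Sigma> ys" "D \<in> \<Sigma>" "0 \<le> c" "\<forall>w\<in>D. c \<le> simple_val ys w"
  shows "si ys D \<le> smul c (\<gamma> D)"
  using assms
proof (induction ys arbitrary: D)
  case Nil
  show ?case
  proof (cases "D = {}")
    case True then show ?thesis using Nil by (simp add: gD smul_eps0)
  next
    case False
    then have "c = 0" using Nil by auto
    then show ?thesis by (simp add: smul_def)
  qed
next
  case (Cons p ys)
  obtain y B where p: "p = (y,B)" by fastforce
  have h: "0 \<le> y" "B \<in> \<Sigma>" "simple_rep \<Sigma> ys" using Cons.prems unfolding p simple_rep_Cons by blast+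
  have S: "D \<inter> B \<in> \<Sigma>" "D - B \<in> \<Sigma>" using Cons.prems h by (auto intro: SInt SDiff)
  have "si (p#ys) D = \<tau> (si (p#ys) (D \<inter> B)) (si (p#ys) (D - B))"
    by (rule si_split[OF Cons.prems(1,2) h(2)])
  also have "\<dots> = \<tau> (smul y (\<gamma> (D \<inter> B))) (si ys (D - B))"
  proof -
    have "(D - B) \<inter> B = {}" by blast
    then show ?thesis using si_single[of y B ys "D \<inter> B"] si_miss[of y B ys "D - B"] Cons.prems S p by simp
  qed
  also have "\<dots> \<le> \<tau> (smul c (\<gamma> (D \<inter> B))) (smul c (\<gamma> (D - B)))"
  proof (rule tf_mono[OF tf])
    show "smul y (\<gamma> (D \<inter> B)) \<le> smul c (\<gamma> (D \<inter> B))"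
    proof (cases "D \<inter> B = {}")
      case True then show ?thesis using h Cons.prems by (simp add: gD smul_eps0)
    next
      case False
      then obtain w where w: "w \<in> D" "w \<in> B" by auto
      have "simple_val (p#ys) w = y" unfolding p by (rule simple_val_Cons_in[OF Cons.prems(1)[unfolded p] w(2)])
      then have "c \<le> y" using bspec[OF Cons.prems(4) w(1)] by simp
      then show ?thesis using smul_anti[OF Cons.prems(3) _ gD(1)[OF S(1)]] by blast
    qed
    show "si ys (D - B) \<le> smul c (\<gamma> (D - B))"
    proof (rule Cons.IH[OF h(3) S(2) Cons.prems(3)], intro ballI)
      fix w assume "w \<in> D - B"
      then show "c \<le> simple_val ys w" using Cons.prems(4) p by (auto simp: simple_val_Cons_out)
    qed
  qed (simp_all add: smul_DP gD S h si_DP Cons.prems)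
  also have "\<dots> = smul c (\<tau> (\<gamma> (D \<inter> B)) (\<gamma> (D - B)))"
    by (rule smul_tau[OF Cons.prems(3) gD(1)[OF S(1)] gD(1)[OF S(2)], symmetric])
  also have "\<tau> (\<gamma> (D \<inter> B)) (\<gamma> (D - B)) = \<gamma> D"
  proof -
    have "\<gamma> ((D \<inter> B) \<union> (D - B)) = \<tau> (\<gamma> (D \<inter> B)) (\<gamma> (D - B))" by (rule gD(3)[OF S]) blast
    moreover have "(D \<inter> B) \<union> (D - B) = D" by blast
    ultimately show ?thesis by simp
  qed
  finally show ?case .
qed

lemma lemM:
  assumes "simple_rep \<Sigma> xs" "simple_rep \<Sigma> ys" "E \<in> \<Sigma>" "\<forall>w\<in>E. simple_val xs w \<le> simple_val ys w"
  shows "si ys E \<le> si xs E"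
  using assms
proof (induction xs arbitrary: E)
  case Nil
  then show ?case using DP_le_eps0[OF si_DP] by simp
next
  case (Cons p xs)
  obtain x A where p: "p = (x,A)" by fastforce
  have h: "0 \<le> x" "A \<in> \<Sigma>" "simple_rep \<Sigma> xs" using Cons.prems unfolding p simple_rep_Cons by blast+
  have S: "E \<inter> A \<in> \<Sigma>" "E - A \<in> \<Sigma>" using Cons.prems h by (auto intro: SInt SDiff)
  have "si ys E = \<tau> (si ys (E \<inter> A)) (si ys (E - A))"
    by (rule si_split[OF Cons.prems(2,3) h(2)])
  also have "\<dots> \<le> \<tau> (smul x (\<gamma> (E \<inter> A))) (si xs (E - A))"
  proof (rule tf_mono[OF tf])
    show "si ys (E \<inter> A) \<le> smul x (\<gamma> (E \<inter> A))"
    proof (rule lemC[OF Cons.prems(2) S(1) h(1)], intro ballI)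
      fix w assume w: "w \<in> E \<inter> A"
      have "simple_val (p#xs) w = x" unfolding p by (rule simple_val_Cons_in[OF Cons.prems(1)[unfolded p]]) (use w in blast)
      then show "x \<le> simple_val ys w" using bspec[OF Cons.prems(4), of w] w by simp
    qed
    show "si ys (E - A) \<le> si xs (E - A)"
    proof (rule Cons.IH[OF h(3) Cons.prems(2) S(2)], intro ballI)
      fix w assume "w \<in> E - A"
      then show "simple_val xs w \<le> simple_val ys w" using Cons.prems(4) p by (auto simp: simple_val_Cons_out)
    qed
  qed (simp_all add: smul_DP gD S h si_DP Cons.prems)
  also have "\<dots> = \<tau> (si (p#xs) (E \<inter> A)) (si (p#xs) (E - A))"
  proof -
    have "(E - A) \<inter> A = {}" by blast
    then show ?thesis using si_single[of x A xs "E \<inter> A"] si_miss[of x A xs "E - A"] Cons.prems S p by simp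
  qed
  also have "\<dots> = si (p#xs) E"
    by (rule si_split[OF Cons.prems(1,3) h(2), symmetric])
  finally show ?case .
qed

lemma Union_S: "simple_rep \<Sigma> xs \<Longrightarrow> \<Union>(snd ` set xs) \<in> \<Sigma>"
proof (induction xs)
  case Nil then show ?case using Sempty by simp
next
  case (Cons p xs)
  obtain y B where p: "p = (y,B)" by fastforce
  have h: "B \<in> \<Sigma>" "simple_rep \<Sigma> xs" using Cons.prems unfolding p simple_rep_Cons by blast+
  then show ?case using Cons.IH p SUn by simp
qed

lemma addone_rep:
  assumes xs: "simple_rep \<Sigma> xs" and y: "0 \<le> y" and B: "B \<in> \<Sigma>"
  shows "simple_rep \<Sigma> (addone xs (y,B))"
proof -
  define U where "U = \<Union>(snd ` set xs)"
  have U: "U \<in> \<Sigma>" using Union_S[OF xs] by (simp add: U_def)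
  have xsD: "\<And>x A. (x,A) \<in> set xs \<Longrightarrow> 0 \<le> x \<and> A \<in> \<Sigma>" using xs unfolding simple_rep_def by blast
  have r1: "simple_rep \<Sigma> (map (\<lambda>(x,A). (max x y, A \<inter> B)) xs)"
    using simple_rep_map[OF xs, where h="\<lambda>x. max x y" and g="\<lambda>A. A \<inter> B"] xsD B SInt by fastforce
  have r2: "simple_rep \<Sigma> (map (\<lambda>(x,A). (x, A - B)) xs)"
    using simple_rep_map[OF xs, where h="\<lambda>x. x" and g="\<lambda>A. A - B"] xsD B SDiff by fastforce
  have r3: "simple_rep \<Sigma> [(y, B - U)]" using y SDiff[OF B U] by (simp add: simple_rep_Cons)
  have r23: "simple_rep \<Sigma> (map (\<lambda>(x,A). (x, A - B)) xs @ [(y, B - U)])"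
    by (rule simple_rep_append[OF r2 r3]) (auto simp: U_def)
  have "simple_rep \<Sigma> (map (\<lambda>(x,A). (max x y, A \<inter> B)) xs @ map (\<lambda>(x,A). (x, A - B)) xs @ [(y, B - U)])"
    by (rule simple_rep_append[OF r1 r23]) (auto simp: U_def)
  then show ?thesis by (simp add: addone_def U_def)
qed

lemma addone_val:
  assumes xs: "simple_rep \<Sigma> xs" and y: "0 \<le> y" and B: "B \<in> \<Sigma>"
  shows "simple_val (addone xs (y,B)) w = (if w \<in> B then max (simple_val xs w) y else simple_val xs w)"
proof -
  note R = addone_rep[OF assms]
  show ?thesis
  proof (cases "\<exists>x A. (x,A) \<in> set xs \<and> w \<in> A")
    case True
    then obtain x A where xA: "(x,A) \<in> set xs" "w \<in> A" by blast
    have v: "simple_val xs w = x" by (rule simple_val_look[OF xs xA])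
    show ?thesis
    proof (cases "w \<in> B")
      case True
      have "(max x y, A \<inter> B) \<in> set (addone xs (y,B))" using xA by (force simp: addone_def)
      from simple_val_look[OF R this] show ?thesis using True v xA by simp
    next
      case False
      have "(x, A - B) \<in> set (addone xs (y,B))" using xA by (force simp: addone_def)
      from simple_val_look[OF R this] show ?thesis using False v xA by simp
    qed
  next
    case False
    then have w: "w \<notin> \<Union>(snd ` set xs)" by force
    then have v: "simple_val xs w = 0" by (rule simple_val_zero)
    show ?thesis
    proof (cases "w \<in> B")
      case True
      have "(y, B - \<Union>(snd ` set xs)) \<in> set (addone xs (y,B))" by (simp add: addone_def)
      from simple_val_look[OF R this] show ?thesis using True v w y by simp
    next
      case nB: False
      have "w \<notin> \<Union>(snd ` set (addone xs (y,B)))" using nB w by (force simp: addone_def)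
      then show ?thesis using simple_val_zero nB v by simp
    qed
  qed
qed

lemma maxrep:
  assumes "simple_rep \<Sigma> xs" "simple_rep \<Sigma> ys"
  shows "simple_rep \<Sigma> (maxrep xs ys) \<and> (\<forall>w. simple_val (maxrep xs ys) w = max (simple_val xs w) (simple_val ys w))"
  using assms
proof (induction ys arbitrary: xs)
  case Nil
  then show ?case using simple_val_nonneg[OF Nil(1)] by (simp add: max_def antisym)
next
  case (Cons p ys)
  obtain y B where p: "p = (y,B)" by fastforce
  have h: "0 \<le> y" "B \<in> \<Sigma>" "simple_rep \<Sigma> ys" "\<forall>q\<in>set ys. B \<inter> snd q = {}"
    using Cons.prems(2) unfolding p simple_rep_Cons by blast+
  have R: "simple_rep \<Sigma> (addone xs (y,B))" by (rule addone_rep[OF Cons.prems(1) h(1,2)])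
  note IH = Cons.IH[OF R h(3)]
  have "simple_val (maxrep xs (p#ys)) w = max (simple_val xs w) (simple_val (p#ys) w)" for w
  proof (cases "w \<in> B")
    case True
    then have "w \<notin> \<Union>(snd ` set ys)" using h(4) by blast
    then have "simple_val ys w = 0" by (rule simple_val_zero)
    moreover have "simple_val (p#ys) w = y" unfolding p by (rule simple_val_Cons_in[OF Cons.prems(2)[unfolded p] True])
    ultimately show ?thesis using IH addone_val[OF Cons.prems(1) h(1,2), of w] True p h(1)
      simple_val_nonneg[OF Cons.prems(1), of w] by (simp add: max_def)
  next
    case False
    then show ?thesis using IH addone_val[OF Cons.prems(1) h(1,2), of w] p
      by (simp add: simple_val_Cons_out)
  qed
  then show ?case using IH p by simp
qed

lemma si_empty: "simple_rep \<Sigma> xs \<Longrightarrow> si xs {} = eps 0"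
  by (rule si_disj) (auto simp: Sempty)

end

theorem theorem5p6:
  fixes \<tau> :: "dist \<Rightarrow> dist \<Rightarrow> dist" and \<Omega> :: "'a set" and \<Sigma> :: "'a set set"
    and \<gamma> :: "'a set \<Rightarrow> dist" and f :: "'a \<Rightarrow> ennreal"
  assumes "triangle_function \<tau>" and "continuous_tf \<tau>" and "distributive_tf \<tau>"
    and "\<Omega> \<noteq> {}" and "sigma_ring \<Omega> \<Sigma>"
    and "decomposable_measure \<tau> \<Sigma> \<gamma>" and "cont_from_below \<Sigma> \<gamma>"
    and "measurable_fn \<Omega> \<Sigma> f"
    and "\<forall>E\<in>\<Sigma>. gamma_integrable \<tau> \<Sigma> \<gamma> f E"
  shows "decomposable_measure \<tau> \<Sigma> (\<lambda>E. gamma_integral \<tau> \<Sigma> \<gamma> f E)"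
proof -
  have ring: "ring_of_sets \<Omega> \<Sigma>" using assms(5) unfolding sigma_ring_def by blast
  interpret ctx \<tau> \<Omega> \<Sigma> \<gamma> by (rule ctx.intro) (fact assms(1), fact assms(3), fact ring, fact assms(6))
  define SI where "SI E = simple_integrals \<tau> \<Sigma> \<gamma> f E" for E
  have SI_mem: "G \<in> SI E \<longleftrightarrow> (\<exists>xs. G = si xs E \<and> simple_rep \<Sigma> xs \<and> (\<forall>w\<in>E. ennreal (simple_val xs w) \<le> f w))" for G E
    unfolding SI_def simple_integrals_def by blast
  have SI_sub: "SI E \<subseteq> Delta_plus" if "E \<in> \<Sigma>" for E
    using si_DP that by (auto simp: SI_mem)
  have SI_ne: "SI E \<noteq> {}" for E
  proof -
    have "si [] E \<in> SI E" unfolding SI_mem by (intro exI[of _ "[]"]) auto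
    then show ?thesis by blast
  qed
  have SI_dir: "\<forall>a\<in>SI E. \<forall>b\<in>SI E. \<exists>c\<in>SI E. c \<le> a \<and> c \<le> b" if E: "E \<in> \<Sigma>" for E
  proof (intro ballI)
    fix a b assume "a \<in> SI E" "b \<in> SI E"
    then obtain xs ys where xs: "a = si xs E" "simple_rep \<Sigma> xs" "\<forall>w\<in>E. ennreal (simple_val xs w) \<le> f w"
      and ys: "b = si ys E" "simple_rep \<Sigma> ys" "\<forall>w\<in>E. ennreal (simple_val ys w) \<le> f w"
      unfolding SI_mem by blast
    define zs where "zs = maxrep xs ys"
    have zs: "simple_rep \<Sigma> zs" "\<And>w. simple_val zs w = max (simple_val xs w) (simple_val ys w)"
      using maxrep[OF xs(2) ys(2)] by (auto simp: zs_def)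
    have "si zs E \<in> SI E" unfolding SI_mem
      using zs xs(3) ys(3) by (intro exI[of _ zs]) (auto simp: max_def)
    moreover have "si zs E \<le> a" unfolding xs(1) by (rule lemM[OF xs(2) zs(1) E]) (simp add: zs(2))
    moreover have "si zs E \<le> b" unfolding ys(1) by (rule lemM[OF ys(2) zs(1) E]) (simp add: zs(2))
    ultimately show "\<exists>c\<in>SI E. c \<le> a \<and> c \<le> b" by blast
  qed
  have nu: "gamma_integral \<tau> \<Sigma> \<gamma> f E = LI (SI E)" if "E \<in> \<Sigma>" for E
    unfolding gamma_integral_def SI_def[symmetric] by (rule Delta_Inf_eq[OF SI_sub[OF that] SI_ne])
  show ?thesis unfolding decomposable_measure_def
  proof (intro conjI ballI impI)
    fix E assume "E \<in> \<Sigma>"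
    then show "gamma_integral \<tau> \<Sigma> \<gamma> f E \<in> Delta_plus" using nu LI_DP[OF SI_sub SI_ne] by simp
  next
    have "SI {} \<subseteq> {eps 0}" using si_empty by (auto simp: SI_mem)
    then have S0: "SI {} = {eps 0}" using SI_ne[of "{}"] by blast
    have "LI {eps 0} \<le> eps 0" by (rule LI_lower) (auto simp: eps0_DP)
    moreover have "eps 0 \<le> LI {eps 0}" by (rule LI_greatest) (auto simp: eps0_DP)
    ultimately show "gamma_integral \<tau> \<Sigma> \<gamma> f {} = eps 0" using nu[OF Sempty] S0 by simp
  next
    fix E F assume E: "E \<in> \<Sigma>" and F: "F \<in> \<Sigma>" and EF: "E \<inter> F = {}"
    have EuF: "E \<union> F \<in> \<Sigma>" using SUn E F by blast
    have I1: "(E \<union> F) \<inter> E = E" and I2: "(E \<union> F) - E = F" using EF by blast+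
    have DE: "LI (SI E) \<in> Delta_plus" and DF: "LI (SI F) \<in> Delta_plus" and DEF: "LI (SI (E \<union> F)) \<in> Delta_plus"
      using LI_DP[OF SI_sub[OF E] SI_ne] LI_DP[OF SI_sub[OF F] SI_ne] LI_DP[OF SI_sub[OF EuF] SI_ne] by simp_all
    have le1: "\<tau> (LI (SI E)) (LI (SI F)) \<le> LI (SI (E \<union> F))"
    proof (rule LI_greatest[OF SI_sub[OF EuF] SI_ne])
      show "\<tau> (LI (SI E)) (LI (SI F)) \<in> Delta_plus" using T(1) DE DF by blast
    next
      fix G assume "G \<in> SI (E \<union> F)"
      then obtain xs where xs: "G = si xs (E \<union> F)" "simple_rep \<Sigma> xs" "\<forall>w\<in>E \<union> F. ennreal (simple_val xs w) \<le> f w"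
        unfolding SI_mem by blast
      have G: "G = \<tau> (si xs E) (si xs F)" using si_split[OF xs(2) EuF E] xs(1) I1 I2 by simp
      have "si xs E \<in> SI E" "si xs F \<in> SI F" unfolding SI_mem using xs by auto
      then have "LI (SI E) \<le> si xs E" "LI (SI F) \<le> si xs F"
        using LI_lower[OF SI_sub[OF E] SI_ne] LI_lower[OF SI_sub[OF F] SI_ne] by simp_all
      then show "\<tau> (LI (SI E)) (LI (SI F)) \<le> G" unfolding G
        by (intro tf_mono[OF tf] DE DF si_DP xs(2) E F)
    qed
    have le2: "LI (SI (E \<union> F)) \<le> \<tau> (LI (SI E)) (LI (SI F))"
    proof (rule key[OF tf assms(2) SI_sub[OF E] SI_ne SI_dir[OF E] SI_sub[OF F] SI_ne SI_dir[OF F] DEF])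
      fix a b assume "a \<in> SI E" "b \<in> SI F"
      then obtain xs ys where xs: "a = si xs E" "simple_rep \<Sigma> xs" "\<forall>w\<in>E. ennreal (simple_val xs w) \<le> f w"
        and ys: "b = si ys F" "simple_rep \<Sigma> ys" "\<forall>w\<in>F. ennreal (simple_val ys w) \<le> f w"
        unfolding SI_mem by blast
      have xsD: "\<And>x A. (x,A) \<in> set xs \<Longrightarrow> 0 \<le> x \<and> A \<in> \<Sigma>" using xs(2) unfolding simple_rep_def by blast
      have ysD: "\<And>x A. (x,A) \<in> set ys \<Longrightarrow> 0 \<le> x \<and> A \<in> \<Sigma>" using ys(2) unfolding simple_rep_def by blast
      have r1: "simple_rep \<Sigma> (map (\<lambda>(x,A). (x, A \<inter> E)) xs)"
        using simple_rep_map[OF xs(2), where h="\<lambda>x. x" and g="\<lambda>A. A \<inter> E"] xsD E SInt by fastforce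
      have r2: "simple_rep \<Sigma> (map (\<lambda>(x,A). (x, A \<inter> F)) ys)"
        using simple_rep_map[OF ys(2), where h="\<lambda>x. x" and g="\<lambda>A. A \<inter> F"] ysD F SInt by fastforce
      define zs where "zs = map (\<lambda>(x,A). (x, A \<inter> E)) xs @ map (\<lambda>(x,A). (x, A \<inter> F)) ys"
      have zs: "simple_rep \<Sigma> zs" unfolding zs_def
        by (rule simple_rep_append[OF r1 r2]) (use EF in auto)
      have zv: "simple_val zs w = (if w \<in> E then simple_val xs w else 0) + (if w \<in> F then simple_val ys w else 0)" for w
        unfolding zs_def simple_val_append simple_val_restrict ..
      have zE: "w \<in> E \<Longrightarrow> simple_val zs w = simple_val xs w" for w using zv[of w] EF by auto
      have zF: "w \<in> F \<Longrightarrow> simple_val zs w = simple_val ys w" for w using zv[of w] EF by auto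
      have "si zs (E \<union> F) \<in> SI (E \<union> F)" unfolding SI_mem
      proof (intro exI conjI ballI)
        fix w assume "w \<in> E \<union> F"
        then show "ennreal (simple_val zs w) \<le> f w" using zE zF xs(3) ys(3) by auto
      qed (auto simp: zs)
      then have "LI (SI (E \<union> F)) \<le> si zs (E \<union> F)" by (rule LI_lower[OF SI_sub[OF EuF] SI_ne])
      also have "\<dots> = \<tau> (si zs E) (si zs F)" using si_split[OF zs EuF E] I1 I2 by simp
      also have "\<dots> \<le> \<tau> a b" unfolding xs(1) ys(1)
        by (intro tf_mono[OF tf] si_DP zs xs(2) ys(2) E F lemM) (simp_all add: zE zF)
      finally show "LI (SI (E \<union> F)) \<le> \<tau> a b" .
    qed
    show "gamma_integral \<tau> \<Sigma> \<gamma> f (E \<union> F) = \<tau> (gamma_integral \<tau> \<Sigma> \<gamma> f E) (gamma_integral \<tau> \<Sigma> \<gamma> f F)"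
      using nu[OF E] nu[OF F] nu[OF EuF] antisym[OF le2 le1] by simp
  qed
qed

end
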